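(* There exists a family of broadcast protocols $(P_n)_{n}$, $P_n=(Q_n,I_n,M_n,\Delta_n)$, with target sets $F_n\subseteq Q_n$, such that for every $n$: there exists a reconfigurable execution of $P_n$ covering $F_n$ with $3$ nodes; and every lossy execution of $P_n$ covering $F_n$ has $\Omega(n)$ nodes.
   Context: A broadcast protocol is a tuple $P=(Q,I,M,\Delta)$ where $Q$ is a finite set of states, $I\subseteq Q$ initial states, $M$ a finite message alphabet and $\Delta\subseteq Q\times\{!!m,\ ??m \mid m\in M\}\times Q$ ($!!m$ = broadcast, $??m$ = reception); protocols are complete for receptions (for every $q$, $m$ there is $q'$ with $(q,??m,q')\in\Delta$). A configuration is a finite undirected graph $\gamma=(V,E,L)$, $E$ symmetric irreflexive, $L:V\to Q$; initial if $L(V)\subseteq I$. A reconfigurable step from $(V,E,L)$ to $(V,E',L')$ ($E'$ arbitrary): some node $v$ and $m$ with $(L(v),!!m,L'(v))\in\Delta$, every neighbour $v'$ of $v$ in $E$ satisfies $(L(v'),??m,L'(v'))\in\Delta$, every other node keeps its label. A lossy step from $(V,E,L)$ to $(V,E,L')$ (edges fixed): some $v$, $m$ with $(L(v),!!m,L'(v))\in\Delta$ and either all other nodes keep their labels (lost broadcast) or as in the reconfigurable step with $E$ (successful broadcast). A reconfigurable (resp. lossy) execution is a sequence $\gamma_0,\dots,\gamma_r$ with $\gamma_0$ initial and consecutive reconfigurable (resp. lossy) steps; its number of nodes is $|V|$, and it covers $F$ if some node of $\gamma_r$ has a label in $F$. *)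

theory Defs
  imports Complex_Main
begin

datatype 'm action = Bcast 'm | Recv 'm

record ('q, 'm) protocol =
  states :: "'q set"
  init   :: "'q set"
  msgs   :: "'m set"
  trans  :: "('q \<times> 'm action \<times> 'q) set"

definition wf_protocol :: "('q, 'm) protocol \<Rightarrow> bool" where
  "wf_protocol P \<longleftrightarrow>
     finite (states P) \<and> finite (msgs P) \<and> init P \<subseteq> states P \<and>
     (\<forall>(q, a, q') \<in> trans P. q \<in> states P \<and> q' \<in> states P \<and>
         (\<exists>m \<in> msgs P. a = Bcast m \<or> a = Recv m)) \<and>
     (\<forall>q \<in> states P. \<forall>m \<in> msgs P. \<exists>q'. (q, Recv m, q') \<in> trans P)"

text \<open>A configuration: finite undirected graph (V, E, L); only the labels on V matter.\<close>
record ('v, 'q) config =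
  nodes :: "'v set"
  edges :: "('v \<times> 'v) set"
  label :: "'v \<Rightarrow> 'q"

definition is_config :: "('q, 'm) protocol \<Rightarrow> ('v, 'q) config \<Rightarrow> bool" where
  "is_config P \<gamma> \<longleftrightarrow>
     finite (nodes \<gamma>) \<and> edges \<gamma> \<subseteq> nodes \<gamma> \<times> nodes \<gamma> \<and>
     sym (edges \<gamma>) \<and> irrefl (edges \<gamma>) \<and> label \<gamma> ` nodes \<gamma> \<subseteq> states P"

definition initial_config :: "('q, 'm) protocol \<Rightarrow> ('v, 'q) config \<Rightarrow> bool" where
  "initial_config P \<gamma> \<longleftrightarrow> is_config P \<gamma> \<and> label \<gamma> ` nodes \<gamma> \<subseteq> init P"

definition succ_bcast :: "('q, 'm) protocol \<Rightarrow> 'v set \<Rightarrow> ('v \<times> 'v) set \<Rightarrow>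
    ('v \<Rightarrow> 'q) \<Rightarrow> ('v \<Rightarrow> 'q) \<Rightarrow> 'v \<Rightarrow> 'm \<Rightarrow> bool" where
  "succ_bcast P V E L L' v m \<longleftrightarrow>
     (L v, Bcast m, L' v) \<in> trans P \<and>
     (\<forall>w \<in> V. (v, w) \<in> E \<longrightarrow> (L w, Recv m, L' w) \<in> trans P) \<and>
     (\<forall>w \<in> V. w \<noteq> v \<and> (v, w) \<notin> E \<longrightarrow> L' w = L w)"

definition lost_bcast :: "('q, 'm) protocol \<Rightarrow> 'v set \<Rightarrow>
    ('v \<Rightarrow> 'q) \<Rightarrow> ('v \<Rightarrow> 'q) \<Rightarrow> 'v \<Rightarrow> 'm \<Rightarrow> bool" where
  "lost_bcast P V L L' v m \<longleftrightarrow>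
     (L v, Bcast m, L' v) \<in> trans P \<and> (\<forall>w \<in> V. w \<noteq> v \<longrightarrow> L' w = L w)"

definition reconf_step :: "('q, 'm) protocol \<Rightarrow> ('v, 'q) config \<Rightarrow> ('v, 'q) config \<Rightarrow> bool" where
  "reconf_step P \<gamma> \<gamma>' \<longleftrightarrow>
     nodes \<gamma>' = nodes \<gamma> \<and> is_config P \<gamma>' \<and>
     (\<exists>v \<in> nodes \<gamma>. \<exists>m. succ_bcast P (nodes \<gamma>) (edges \<gamma>) (label \<gamma>) (label \<gamma>') v m)"

definition lossy_step :: "('q, 'm) protocol \<Rightarrow> ('v, 'q) config \<Rightarrow> ('v, 'q) config \<Rightarrow> bool" where
  "lossy_step P \<gamma> \<gamma>' \<longleftrightarrow>
     nodes \<gamma>' = nodes \<gamma> \<and> edges \<gamma>' = edges \<gamma> \<and> is_config P \<gamma>' \<and>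
     (\<exists>v \<in> nodes \<gamma>. \<exists>m.
        lost_bcast P (nodes \<gamma>) (label \<gamma>) (label \<gamma>') v m \<or>
        succ_bcast P (nodes \<gamma>) (edges \<gamma>) (label \<gamma>) (label \<gamma>') v m)"

definition execution ::
    "(('q, 'm) protocol \<Rightarrow> ('v, 'q) config \<Rightarrow> ('v, 'q) config \<Rightarrow> bool) \<Rightarrow>
     ('q, 'm) protocol \<Rightarrow> ('v, 'q) config list \<Rightarrow> bool" where
  "execution step P xs \<longleftrightarrow>
     xs \<noteq> [] \<and> initial_config P (hd xs) \<and>
     (\<forall>i. Suc i < length xs \<longrightarrow> step P (xs ! i) (xs ! Suc i))"

definition num_nodes :: "('v, 'q) config list \<Rightarrow> nat" where
  "num_nodes xs = card (nodes (hd xs))"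

definition covers :: "('v, 'q) config list \<Rightarrow> 'q set \<Rightarrow> bool" where
  "covers xs F \<longleftrightarrow> (\<exists>v \<in> nodes (last xs). label (last xs) v \<in> F)"

end

theory Submission
  imports Defs "HOL-Library.Countable"
begin

datatype st = Cst nat | Dead | Rr bool | Hh nat bool
datatype msg = Ack | Inc nat | Rm nat

instance st :: countable by countable_datatype
instance msg :: countable by countable_datatype

definition Sset :: "nat \<Rightarrow> st set" where
  "Sset n = Cst ` {..n} \<union> {Dead, Rr True, Rr False} \<union> (\<lambda>(j,b). Hh j b) ` ({..n} \<times> UNIV)"

definition Mset :: "nat \<Rightarrow> msg set" where
  "Mset n = {Ack} \<union> Inc ` {..n} \<union> Rm ` {..n}"

fun dl :: "nat \<Rightarrow> st \<Rightarrow> msg \<Rightarrow> st" where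
  "dl n (Cst i) m = (if i < n then (case m of Inc k \<Rightarrow> if k = i then Cst (Suc i) else Cst i
        | Rm k \<Rightarrow> Dead | Ack \<Rightarrow> Cst i) else Cst i)"
| "dl n Dead m = Dead"
| "dl n (Rr b) m = (if m = Ack then Rr True else Rr b)"
| "dl n (Hh j b) m = (if \<not> b \<and> m = Rm j \<and> j < n then Hh (Suc j) True else Hh j b)"

definition bc :: "nat \<Rightarrow> st \<Rightarrow> msg \<Rightarrow> st \<Rightarrow> bool" where
  "bc n q m q' \<longleftrightarrow> (\<exists>i<n. q = Cst i \<and> m = Ack \<and> q' = Cst i) \<or>
     (\<exists>j\<le>n. q = Rr True \<and> m = Rm j \<and> q' = Rr False) \<or>
     (\<exists>j\<le>n. q = Hh j True \<and> m = Inc j \<and> q' = Hh j False)"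

definition Pn :: "nat \<Rightarrow> (nat, nat) protocol" where
  "Pn n = \<lparr>states = to_nat ` Sset n, init = to_nat ` {Cst 0, Rr False, Hh 0 True},
     msgs = to_nat ` Mset n,
     trans = {(to_nat q, Recv (to_nat m), to_nat (dl n q m)) | q m. q \<in> Sset n \<and> m \<in> Mset n}
       \<union> {(to_nat q, Bcast (to_nat m), to_nat q') | q m q'. bc n q m q'}\<rparr>"

definition Fn :: "nat \<Rightarrow> nat set" where "Fn n = {to_nat (Cst n)}"

lemma dl_in: "q \<in> Sset n \<Longrightarrow> m \<in> Mset n \<Longrightarrow> dl n q m \<in> Sset n"
  by (cases q; cases m) (auto simp: Sset_def Mset_def)

lemma bc_in: "bc n q m q' \<Longrightarrow> q \<in> Sset n \<and> m \<in> Mset n \<and> q' \<in> Sset n"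
  by (auto simp: bc_def Sset_def Mset_def)

lemma finS: "finite (Sset n)" by (simp add: Sset_def)
lemma finM: "finite (Mset n)" by (simp add: Mset_def)

lemma wf: "wf_protocol (Pn n)"
  unfolding wf_protocol_def
proof (intro conjI)
  show "finite (states (Pn n))" by (simp add: Pn_def finS)
  show "finite (msgs (Pn n))" by (simp add: Pn_def finM)
  show "init (Pn n) \<subseteq> states (Pn n)" by (auto simp: Pn_def Sset_def)
  show "\<forall>(q, a, q')\<in>trans (Pn n). q \<in> states (Pn n) \<and> q' \<in> states (Pn n) \<and>
      (\<exists>m\<in>msgs (Pn n). a = Bcast m \<or> a = Recv m)"
    by (auto simp: Pn_def dl_in dest: bc_in)
  show "\<forall>q\<in>states (Pn n). \<forall>m\<in>msgs (Pn n). \<exists>q'. (q, Recv m, q') \<in> trans (Pn n)"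
    by (auto simp: Pn_def)
qed

lemma F_sub: "Fn n \<subseteq> states (Pn n)"
  by (auto simp: Fn_def Pn_def Sset_def)

lemma recvD: "(a, Recv b, c) \<in> trans (Pn n) \<Longrightarrow>
   (from_nat c :: st) = dl n (from_nat a) (from_nat b)"
  by (auto simp: Pn_def)

lemma bcastD: "(a, Bcast b, c) \<in> trans (Pn n) \<Longrightarrow>
   bc n (from_nat a) (from_nat b) (from_nat c)"
  by (auto simp: Pn_def)


definition lab :: "st \<Rightarrow> st \<Rightarrow> st \<Rightarrow> nat \<Rightarrow> nat" where
  "lab c h r v = (if v = 0 then to_nat c else if v = 1 then to_nat h else to_nat r)"

definition cA :: "nat \<Rightarrow> (nat, nat) config" where
  "cA i = \<lparr>nodes = {0,1,2}, edges = {(0,1),(1,0)}, label = lab (Cst i) (Hh i True) (Rr False)\<rparr>"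
definition cB :: "nat \<Rightarrow> (nat, nat) config" where
  "cB i = \<lparr>nodes = {0,1,2}, edges = {(0,2),(2,0)}, label = lab (Cst (Suc i)) (Hh i False) (Rr False)\<rparr>"
definition cD :: "nat \<Rightarrow> (nat, nat) config" where
  "cD i = \<lparr>nodes = {0,1,2}, edges = {(1,2),(2,1)}, label = lab (Cst (Suc i)) (Hh i False) (Rr True)\<rparr>"

definition cf :: "nat \<Rightarrow> (nat, nat) config" where
  "cf k = (if k mod 3 = 0 then cA (k div 3) else if k mod 3 = 1 then cB (k div 3) else cD (k div 3))"

lemma isc_lab: "c \<in> Sset n \<Longrightarrow> h \<in> Sset n \<Longrightarrow> r \<in> Sset n \<Longrightarrow> E \<subseteq> {0,1,2} \<times> {0,1,2} \<Longrightarrow>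
  sym E \<Longrightarrow> irrefl E \<Longrightarrow>
  is_config (Pn n) \<lparr>nodes = {0,1,2}, edges = E, label = lab c h r\<rparr>"
  by (auto simp: is_config_def Pn_def lab_def)

lemma S_C: "i \<le> n \<Longrightarrow> Cst i \<in> Sset n" by (simp add: Sset_def)
lemma S_H: "i \<le> n \<Longrightarrow> Hh i b \<in> Sset n" by (auto simp: Sset_def)
lemma S_R: "Rr b \<in> Sset n" by (cases b) (auto simp: Sset_def)

lemma recv_mem: "q \<in> Sset n \<Longrightarrow> m \<in> Mset n \<Longrightarrow> q' = dl n q m \<Longrightarrow>
  (to_nat q, Recv (to_nat m), to_nat q') \<in> trans (Pn n)"
  unfolding Pn_def by auto

lemma bc_mem: "bc n q m q' \<Longrightarrow> (to_nat q, Bcast (to_nat m), to_nat q') \<in> trans (Pn n)"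
  unfolding Pn_def by auto

lemma M_I: "i \<le> n \<Longrightarrow> Inc i \<in> Mset n" by (simp add: Mset_def)
lemma M_R: "i \<le> n \<Longrightarrow> Rm i \<in> Mset n" by (simp add: Mset_def)
lemma M_A: "Ack \<in> Mset n" by (simp add: Mset_def)

lemma stepAB: "i < n \<Longrightarrow> reconf_step (Pn n) (cA i) (cB i)"
  unfolding reconf_step_def
proof (intro conjI)
  assume i: "i < n"
  show "nodes (cB i) = nodes (cA i)" by (simp add: cA_def cB_def)
  show "is_config (Pn n) (cB i)" unfolding cB_def
    by (rule isc_lab) (use i in \<open>auto simp: S_C S_H S_R sym_def irrefl_def\<close>)
  have b: "bc n (Hh i True) (Inc i) (Hh i False)" using i by (auto simp: bc_def)
  have r: "(to_nat (Cst i), Recv (to_nat (Inc i)), to_nat (Cst (Suc i))) \<in> trans (Pn n)"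
    by (rule recv_mem) (use i in \<open>auto simp: S_C M_I\<close>)
  show "\<exists>v\<in>nodes (cA i). \<exists>m. succ_bcast (Pn n) (nodes (cA i)) (edges (cA i)) (label (cA i)) (label (cB i)) v m"
    apply (rule bexI[where x=1], rule exI[where x="to_nat (Inc i)"])
    using bc_mem[OF b] r by (auto simp: succ_bcast_def cA_def cB_def lab_def)
qed

lemma stepBD: "Suc i < n \<Longrightarrow> reconf_step (Pn n) (cB i) (cD i)"
  unfolding reconf_step_def
proof (intro conjI)
  assume i: "Suc i < n"
  show "nodes (cD i) = nodes (cB i)" by (simp add: cD_def cB_def)
  show "is_config (Pn n) (cD i)" unfolding cD_def
    by (rule isc_lab) (use i in \<open>auto simp: S_C S_H S_R sym_def irrefl_def\<close>)
  have b: "bc n (Cst (Suc i)) Ack (Cst (Suc i))" using i by (auto simp: bc_def)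
  have r: "(to_nat (Rr False), Recv (to_nat Ack), to_nat (Rr True)) \<in> trans (Pn n)"
    by (rule recv_mem) (auto simp: S_R M_A)
  show "\<exists>v\<in>nodes (cB i). \<exists>m. succ_bcast (Pn n) (nodes (cB i)) (edges (cB i)) (label (cB i)) (label (cD i)) v m"
    apply (rule bexI[where x=0], rule exI[where x="to_nat Ack"])
    using bc_mem[OF b] r by (auto simp: succ_bcast_def cD_def cB_def lab_def)
qed

lemma stepDA: "Suc i < n \<Longrightarrow> reconf_step (Pn n) (cD i) (cA (Suc i))"
  unfolding reconf_step_def
proof (intro conjI)
  assume i: "Suc i < n"
  show "nodes (cA (Suc i)) = nodes (cD i)" by (simp add: cD_def cA_def)
  show "is_config (Pn n) (cA (Suc i))" unfolding cA_def
    by (rule isc_lab) (use i in \<open>auto simp: S_C S_H S_R sym_def irrefl_def\<close>)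
  have b: "bc n (Rr True) (Rm i) (Rr False)" using i by (auto simp: bc_def)
  have r: "(to_nat (Hh i False), Recv (to_nat (Rm i)), to_nat (Hh (Suc i) True)) \<in> trans (Pn n)"
    by (rule recv_mem) (use i in \<open>auto simp: S_H M_R\<close>)
  show "\<exists>v\<in>nodes (cD i). \<exists>m. succ_bcast (Pn n) (nodes (cD i)) (edges (cD i)) (label (cD i)) (label (cA (Suc i))) v m"
    apply (rule bexI[where x=2], rule exI[where x="to_nat (Rm i)"])
    using bc_mem[OF b] r by (auto simp: succ_bcast_def cD_def cA_def lab_def)
qed


lemma cf0: "cf (3*i) = cA i" by (simp add: cf_def)
lemma cf1: "cf (3*i+1) = cB i"
proof -
  have "(3*i+1) mod 3 = 1" "(3*i+1) div 3 = i" by presburger+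
  then show ?thesis by (simp add: cf_def)
qed
lemma cf2: "cf (3*i+2) = cD i"
proof -
  have "(3*i+2) mod 3 = 2" "(3*i+2) div 3 = i" by presburger+
  then show ?thesis by (simp add: cf_def)
qed
lemma cf3: "cf (3*i+3) = cA (Suc i)"
proof -
  have "3*i+3 = 3*(Suc i)" by simp
  then show ?thesis using cf0 by metis
qed

lemma cf_step: "k < 3 * n - 2 \<Longrightarrow> reconf_step (Pn n) (cf k) (cf (Suc k))"
proof -
  assume k: "k < 3 * n - 2"
  obtain i r where kr: "k = 3*i + r" "r < 3" using div_mod_decomp[of k 3] by (metis mod_less_divisor zero_less_numeral mult.commute)
  have "r = 0 \<or> r = 1 \<or> r = 2" using kr by arith
  moreover
  { assume h: "r = 0"
    then have "i < n" using k kr by simp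
    then have ?thesis using stepAB cf0 cf1 kr h by (metis Suc_eq_plus1 add_0_right) }
  moreover
  { assume h: "r = 1"
    then have "Suc i < n" using k kr by simp
    moreover have "Suc k = 3*i+2" using kr h by simp
    ultimately have ?thesis using stepBD cf2 cf1 kr h by metis }
  moreover
  { assume h: "r = 2"
    then have "Suc i < n" using k kr by simp
    moreover have "Suc k = 3*i+3" using kr h by simp
    ultimately have ?thesis using stepDA cf2 cf3 kr h by metis }
  ultimately show ?thesis by blast
qed

lemma reconf_exists: "\<exists>xs :: (nat, nat) config list.
   execution reconf_step (Pn n) xs \<and> covers xs (Fn n) \<and> num_nodes xs = 3"
proof (intro exI conjI)
  let ?xs = "map cf [0..<Suc (3*n-2)]"
  have hd: "hd ?xs = cA 0" using cf0[of 0] by (simp add: hd_map del: upt_Suc)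
  show "execution reconf_step (Pn n) ?xs"
    unfolding execution_def
  proof (intro conjI allI impI)
    show "?xs \<noteq> []" by simp
    show "initial_config (Pn n) (hd ?xs)" unfolding hd
      by (auto simp: initial_config_def is_config_def Pn_def cA_def lab_def sym_def irrefl_def S_C S_H S_R)
    fix k assume "Suc k < length ?xs"
    then have "k < 3*n-2" by simp
    then show "reconf_step (Pn n) (?xs ! k) (?xs ! Suc k)"
      using cf_step by (simp del: upt_Suc)
  qed
  have last: "last ?xs = cf (3*n-2)" by (simp add: last_map del: upt_Suc)
  show "covers ?xs (Fn n)"
  proof (cases n)
    case 0
    then show ?thesis unfolding covers_def last using cf0[of 0] by (simp add: cA_def lab_def Fn_def)
  next
    case (Suc m)
    then have "3*n-2 = 3*m+1" by simp
    then have "cf (3*n-2) = cB m" using cf1 by metis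
    then show ?thesis unfolding covers_def last using Suc by (simp add: cB_def lab_def Fn_def)
  qed
  show "num_nodes ?xs = 3" unfolding num_nodes_def hd
    by (simp add: cA_def)
qed


definition alive :: "nat \<Rightarrow> st \<Rightarrow> bool" where "alive n q \<longleftrightarrow> (\<exists>i<n. q = Cst i)"

definition NF :: "nat \<Rightarrow> nat set \<Rightarrow> (nat \<times> nat) set \<Rightarrow> (nat \<Rightarrow> st) \<Rightarrow> nat set" where
  "NF n V E s = {u \<in> V. s u = Rr False \<and> (\<forall>w\<in>V. (u,w) \<in> E \<longrightarrow> \<not> alive n (s w))}"

definition Inv :: "nat \<Rightarrow> nat set \<Rightarrow> (nat \<times> nat) set \<Rightarrow> (nat \<Rightarrow> st) \<Rightarrow> bool" where
  "Inv n V E s \<longleftrightarrow> (\<forall>v\<in>V. \<forall>j b. s v = Hh j b \<longrightarrow> j \<le> card (NF n V E s)) \<and>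
     (\<forall>v\<in>V. \<forall>i. s v = Cst i \<longrightarrow> i \<le> Suc (card (NF n V E s)))"

lemma dl_nonalive: "\<not> alive n q \<Longrightarrow> \<not> alive n (dl n q m)"
  by (cases q; cases m) (auto simp: alive_def)
lemma dl_Rm: "\<not> alive n (dl n q (Rm k))"
  by (cases q) (auto simp: alive_def)
lemma dl_RrF: "m \<noteq> Ack \<Longrightarrow> dl n (Rr False) m = Rr False" by simp
lemma dl_C: "dl n q m = Cst i \<Longrightarrow> q = Cst i \<or> (0 < i \<and> q = Cst (i-1) \<and> m = Inc (i-1))"
  by (cases q; cases m) (auto split: if_splits)
lemma dl_H: "dl n q m = Hh j b \<Longrightarrow> q = Hh j b \<or> (0 < j \<and> q = Hh (j-1) False \<and> m = Rm (j-1))"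
  by (cases q; cases m) (auto split: if_splits)
lemma bc_Ack: "bc n q Ack q' \<Longrightarrow> alive n q" by (auto simp: bc_def alive_def)
lemma bc_nonalive: "bc n q m q' \<Longrightarrow> \<not> alive n q \<Longrightarrow> \<not> alive n q'" by (auto simp: bc_def alive_def)
lemma bc_RrF: "\<not> bc n (Rr False) m q'" by (auto simp: bc_def)
lemma bc_C: "bc n q m (Cst i) \<Longrightarrow> q = Cst i" by (auto simp: bc_def)
lemma bc_H: "bc n q m (Hh j b) \<Longrightarrow> q = Hh j True" by (auto simp: bc_def)
lemma bc_Inc: "bc n q (Inc k) q' \<Longrightarrow> q = Hh k True" by (auto simp: bc_def)
lemma bc_Rm: "bc n q (Rm k) q' \<Longrightarrow> q = Rr True \<and> q' = Rr False" by (auto simp: bc_def)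

lemma core:
  fixes s s' :: "nat \<Rightarrow> st"
  assumes fin: "finite V" and sy: "sym E" and ir: "irrefl E" and v: "v \<in> V"
    and b: "bc n (s v) mm (s' v)"
    and upd: "\<And>w. w \<in> V \<Longrightarrow> w \<noteq> v \<Longrightarrow> s' w = (if S \<and> (v,w) \<in> E then dl n (s w) mm else s w)"
    and inv: "Inv n V E s"
  shows "Inv n V E s' \<and> NF n V E s \<subseteq> NF n V E s'"
proof -
  have sub: "NF n V E s \<subseteq> NF n V E s'"
  proof
    fix u assume u: "u \<in> NF n V E s"
    then have uV: "u \<in> V" and su: "s u = Rr False" and nb: "\<And>w. w \<in> V \<Longrightarrow> (u,w) \<in> E \<Longrightarrow> \<not> alive n (s w)"
      by (auto simp: NF_def)
    have uv: "u \<noteq> v" using b su bc_RrF by metis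
    have s'u: "s' u = Rr False"
    proof (cases "S \<and> (v,u) \<in> E")
      case True
      then have "(u,v) \<in> E" using sy by (meson symD)
      then have "\<not> alive n (s v)" using nb v by blast
      then have "mm \<noteq> Ack" using b bc_Ack by blast
      then show ?thesis using upd[OF uV uv] True su by simp
    next
      case False
      then show ?thesis using upd[OF uV uv] su by simp
    qed
    have "\<not> alive n (s' w)" if w: "w \<in> V" "(u,w) \<in> E" for w
    proof (cases "w = v")
      case True
      then show ?thesis using nb[OF w] b bc_nonalive by blast
    next
      case False
      then show ?thesis using upd[OF w(1) False] nb[OF w] dl_nonalive by auto
    qed
    then show "u \<in> NF n V E s'" using uV s'u by (auto simp: NF_def)
  qed
  have finNF: "finite (NF n V E s')" using fin by (simp add: NF_def)
  have cmono: "card (NF n V E s) \<le> card (NF n V E s')" using card_mono[OF finNF sub] .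
  have bump: "Suc (card (NF n V E s)) \<le> card (NF n V E s')" if hS: "S" and sv: "s v = Rr True"
      and ms: "mm = Rm k" for k
  proof -
    have s'v: "s' v = Rr False" using b ms bc_Rm by blast
    have "\<not> alive n (s' w)" if w: "w \<in> V" "(v,w) \<in> E" for w
    proof -
      have "w \<noteq> v" using w(2) ir by (auto simp: irrefl_def)
      then show ?thesis using upd[OF w(1)] hS w(2) ms dl_Rm by simp
    qed
    then have "v \<in> NF n V E s'" using v s'v by (auto simp: NF_def)
    moreover have "v \<notin> NF n V E s" using sv by (auto simp: NF_def)
    ultimately have "insert v (NF n V E s) \<subseteq> NF n V E s'" using sub by blast
    then have "card (insert v (NF n V E s)) \<le> card (NF n V E s')" using card_mono[OF finNF] by blast
    moreover have "finite (NF n V E s)" using fin by (simp add: NF_def)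
    ultimately show ?thesis using \<open>v \<notin> NF n V E s\<close> by simp
  qed
  have invH: "\<And>w j b. w \<in> V \<Longrightarrow> s w = Hh j b \<Longrightarrow> j \<le> card (NF n V E s)"
    and invC: "\<And>w i. w \<in> V \<Longrightarrow> s w = Cst i \<Longrightarrow> i \<le> Suc (card (NF n V E s))"
    using inv by (auto simp: Inv_def)
  have H': "j \<le> card (NF n V E s')" if w: "w \<in> V" "s' w = Hh j bb" for w j bb
  proof (cases "w = v")
    case True
    then have "s v = Hh j True" using b w bc_H by metis
    then show ?thesis using invH[OF v] cmono by fastforce
  next
    case False
    show ?thesis
    proof (cases "S \<and> (v,w) \<in> E")
      case True
      then have "dl n (s w) mm = Hh j bb" using upd[OF w(1) False] w by simp
      then have "s w = Hh j bb \<or> (0 < j \<and> s w = Hh (j-1) False \<and> mm = Rm (j-1))" by (rule dl_H)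
      then show ?thesis
      proof
        assume "s w = Hh j bb" then show ?thesis using invH[OF w(1)] cmono by fastforce
      next
        assume h: "0 < j \<and> s w = Hh (j-1) False \<and> mm = Rm (j-1)"
        then have "s v = Rr True" using b bc_Rm by blast
        then have "Suc (card (NF n V E s)) \<le> card (NF n V E s')" using bump True h by blast
        moreover have "j - 1 \<le> card (NF n V E s)" using invH[OF w(1)] h by blast
        ultimately show ?thesis by linarith
      qed
    next
      case F2: False
      then have "s w = Hh j bb" using upd[OF w(1) False] w F2 by simp
      then show ?thesis using invH[OF w(1)] cmono by fastforce
    qed
  qed
  have C': "i \<le> Suc (card (NF n V E s'))" if w: "w \<in> V" "s' w = Cst i" for w i
  proof (cases "w = v")
    case True
    then have "s v = Cst i" using b w bc_C by metis
    then show ?thesis using invC[OF v] cmono by fastforce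
  next
    case False
    show ?thesis
    proof (cases "S \<and> (v,w) \<in> E")
      case True
      then have "dl n (s w) mm = Cst i" using upd[OF w(1) False] w by simp
      then have "s w = Cst i \<or> (0 < i \<and> s w = Cst (i-1) \<and> mm = Inc (i-1))" by (rule dl_C)
      then show ?thesis
      proof
        assume "s w = Cst i" then show ?thesis using invC[OF w(1)] cmono by fastforce
      next
        assume h: "0 < i \<and> s w = Cst (i-1) \<and> mm = Inc (i-1)"
        then have "s v = Hh (i-1) True" using b bc_Inc by blast
        then have "i - 1 \<le> card (NF n V E s)" using invH[OF v] by blast
        then show ?thesis using cmono by linarith
      qed
    next
      case F2: False
      then have "s w = Cst i" using upd[OF w(1) False] w F2 by simp
      then show ?thesis using invC[OF w(1)] cmono by fastforce
    qed
  qed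
  show ?thesis using H' C' sub by (auto simp: Inv_def)
qed


definition sv :: "(nat, nat) config \<Rightarrow> nat \<Rightarrow> st" where
  "sv \<gamma> v = from_nat (label \<gamma> v)"

lemma lossy_inv:
  assumes st: "lossy_step (Pn n) \<gamma> \<gamma>'" and ic: "is_config (Pn n) \<gamma>"
    and inv: "Inv n (nodes \<gamma>) (edges \<gamma>) (sv \<gamma>)"
  shows "Inv n (nodes \<gamma>') (edges \<gamma>') (sv \<gamma>')"
proof -
  have N: "nodes \<gamma>' = nodes \<gamma>" and E: "edges \<gamma>' = edges \<gamma>"
    using st by (auto simp: lossy_step_def)
  from st obtain v m where v: "v \<in> nodes \<gamma>" and
    c: "lost_bcast (Pn n) (nodes \<gamma>) (label \<gamma>) (label \<gamma>') v m \<or>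
        succ_bcast (Pn n) (nodes \<gamma>) (edges \<gamma>) (label \<gamma>) (label \<gamma>') v m"
    by (auto simp: lossy_step_def)
  have fin: "finite (nodes \<gamma>)" and sy: "sym (edges \<gamma>)" and ir: "irrefl (edges \<gamma>)"
    using ic by (auto simp: is_config_def)
  from c show ?thesis
  proof
    assume l: "lost_bcast (Pn n) (nodes \<gamma>) (label \<gamma>) (label \<gamma>') v m"
    have b: "bc n (sv \<gamma> v) (from_nat m) (sv \<gamma>' v)"
      using l bcastD unfolding lost_bcast_def sv_def by blast
    have upd: "\<And>w. w \<in> nodes \<gamma> \<Longrightarrow> w \<noteq> v \<Longrightarrow> sv \<gamma>' w =
        (if False \<and> (v,w) \<in> edges \<gamma> then dl n (sv \<gamma> w) (from_nat m) else sv \<gamma> w)"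
      using l unfolding lost_bcast_def sv_def by simp
    show ?thesis using core[OF fin sy ir v b upd inv] N E by simp
  next
    assume l: "succ_bcast (Pn n) (nodes \<gamma>) (edges \<gamma>) (label \<gamma>) (label \<gamma>') v m"
    have b: "bc n (sv \<gamma> v) (from_nat m) (sv \<gamma>' v)"
      using l bcastD unfolding succ_bcast_def sv_def by blast
    have upd: "sv \<gamma>' w =
        (if True \<and> (v,w) \<in> edges \<gamma> then dl n (sv \<gamma> w) (from_nat m) else sv \<gamma> w)"
      if "w \<in> nodes \<gamma>" "w \<noteq> v" for w
      using l that recvD unfolding succ_bcast_def sv_def by (cases "(v,w) \<in> edges \<gamma>") auto
    show ?thesis using core[OF fin sy ir v b upd inv] N E by simp
  qed
qed

lemma exec_inv:
  assumes ex: "execution lossy_step (Pn n) xs"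
  shows "i < length xs \<Longrightarrow> nodes (xs ! i) = nodes (hd xs) \<and> is_config (Pn n) (xs ! i) \<and>
     Inv n (nodes (xs ! i)) (edges (xs ! i)) (sv (xs ! i))"
proof (induction i)
  case 0
  have ne: "xs \<noteq> []" and ini: "initial_config (Pn n) (hd xs)" using ex by (auto simp: execution_def)
  then have h0: "xs ! 0 = hd xs" by (simp add: hd_conv_nth)
  have lab: "\<And>v. v \<in> nodes (hd xs) \<Longrightarrow> sv (hd xs) v \<in> {Cst 0, Rr False, Hh 0 True}"
  proof -
    fix v assume "v \<in> nodes (hd xs)"
    then have "label (hd xs) v \<in> to_nat ` {Cst 0, Rr False, Hh 0 True}"
      using ini by (auto simp: initial_config_def Pn_def)
    then show "sv (hd xs) v \<in> {Cst 0, Rr False, Hh 0 True}" unfolding sv_def by auto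
  qed
  have "Inv n (nodes (hd xs)) (edges (hd xs)) (sv (hd xs))"
    unfolding Inv_def using lab by fastforce
  then show ?case using h0 ini by (simp add: initial_config_def)
next
  case (Suc i)
  have IH: "nodes (xs ! i) = nodes (hd xs) \<and> is_config (Pn n) (xs ! i) \<and>
     Inv n (nodes (xs ! i)) (edges (xs ! i)) (sv (xs ! i))" using Suc.IH Suc.prems by (meson Suc_lessD)
  have st: "lossy_step (Pn n) (xs ! i) (xs ! Suc i)" using ex Suc.prems by (auto simp: execution_def)
  then have "nodes (xs ! Suc i) = nodes (xs ! i)" "is_config (Pn n) (xs ! Suc i)"
    by (auto simp: lossy_step_def)
  then show ?case using IH lossy_inv[OF st] by metis
qed

lemma lossy_bound:
  fixes xs :: "(nat, nat) config list"
  assumes ex: "execution lossy_step (Pn n) xs" and cv: "covers xs (Fn n)"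
  shows "n \<le> Suc (num_nodes xs)"
proof -
  have ne: "xs \<noteq> []" using ex by (simp add: execution_def)
  let ?k = "length xs - 1"
  have k: "?k < length xs" and l: "last xs = xs ! ?k" using ne by (auto simp: last_conv_nth)
  note I = exec_inv[OF ex k]
  from cv obtain v where v: "v \<in> nodes (last xs)" and lv: "label (last xs) v = to_nat (Cst n)"
    by (auto simp: covers_def Fn_def)
  have "sv (xs ! ?k) v = Cst n" using lv l by (simp add: sv_def)
  then have "n \<le> Suc (card (NF n (nodes (xs ! ?k)) (edges (xs ! ?k)) (sv (xs ! ?k))))"
    using I v l unfolding Inv_def by metis
  moreover have "card (NF n (nodes (xs ! ?k)) (edges (xs ! ?k)) (sv (xs ! ?k))) \<le> card (nodes (xs ! ?k))"
    using I by (intro card_mono) (auto simp: is_config_def NF_def)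
  ultimately show ?thesis using I by (simp add: num_nodes_def)
qed

theorem theorem4p1:
  shows "\<exists>(P :: nat \<Rightarrow> (nat, nat) protocol) (F :: nat \<Rightarrow> nat set).
     (\<forall>n. wf_protocol (P n) \<and> F n \<subseteq> states (P n)) \<and>
     (\<forall>n. \<exists>xs :: (nat, nat) config list.
          execution reconf_step (P n) xs \<and> covers xs (F n) \<and> num_nodes xs = 3) \<and>
     (\<exists>c :: real. c > 0 \<and> (\<exists>N. \<forall>n \<ge> N. \<forall>xs :: (nat, nat) config list.
          execution lossy_step (P n) xs \<and> covers xs (F n) \<longrightarrow> real (num_nodes xs) \<ge> c * real n))"
proof -
  have A: "\<forall>n. wf_protocol (Pn n) \<and> Fn n \<subseteq> states (Pn n)" using wf F_sub by blast
  have B: "\<forall>n. \<exists>xs :: (nat, nat) config list.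
          execution reconf_step (Pn n) xs \<and> covers xs (Fn n) \<and> num_nodes xs = 3"
    using reconf_exists by blast
  have C: "\<forall>n \<ge> 2. \<forall>xs :: (nat, nat) config list.
          execution lossy_step (Pn n) xs \<and> covers xs (Fn n) \<longrightarrow> real (num_nodes xs) \<ge> (1/2) * real n"
  proof (intro allI impI)
    fix n :: nat and xs :: "(nat, nat) config list"
    assume n: "2 \<le> n" and h: "execution lossy_step (Pn n) xs \<and> covers xs (Fn n)"
    then have "n \<le> Suc (num_nodes xs)" using lossy_bound by blast
    then show "1/2 * real n \<le> real (num_nodes xs)" using n by linarith
  qed
  have "(0::real) < 1/2" by simp
  then show ?thesis using A B C by blast
qed

end
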